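(* For all integers $v\ge 2$ and $t\ge 2$, $I_t(2,v)=v-1$.
   Context: A $(w,v)$ set system is a pair $(\mathcal{X},\mathcal{B})$ with $|\mathcal{X}|=v$ and $\mathcal{B}\subseteq\binom{\mathcal{X}}{w}$ (the family of all $w$-element subsets of $\mathcal{X}$); elements of $\mathcal{B}$ are blocks. For a $w$-subset $T\subseteq\mathcal{X}$ let $P_t(T)=\{\mathcal{P}\subseteq\mathcal{B}: |\mathcal{P}|\le t,\ T\subseteq\bigcup_{B\in\mathcal{P}}B\}$. The set system is a $t$-IPPS$(w,v)$ if for every $w$-subset $T\subseteq\mathcal{X}$, either $P_t(T)=\emptyset$ or $\bigcap_{\mathcal{P}\in P_t(T)}\mathcal{P}\neq\emptyset$. $I_t(w,v)$ denotes the maximum of $|\mathcal{B}|$ over all $t$-IPPS$(w,v)$. *)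

theory Defs
  imports Main
begin

definition set_system :: "nat \<Rightarrow> nat \<Rightarrow> 'a set \<Rightarrow> 'a set set \<Rightarrow> bool" where
  "set_system w v X B \<longleftrightarrow> finite X \<and> card X = v \<and> B \<subseteq> {S. S \<subseteq> X \<and> card S = w}"

definition P_t :: "nat \<Rightarrow> 'a set set \<Rightarrow> 'a set \<Rightarrow> 'a set set set" where
  "P_t t B T = {P. P \<subseteq> B \<and> card P \<le> t \<and> T \<subseteq> \<Union>P}"

definition IPPS :: "nat \<Rightarrow> nat \<Rightarrow> nat \<Rightarrow> 'a set \<Rightarrow> 'a set set \<Rightarrow> bool" where
  "IPPS t w v X B \<longleftrightarrow> set_system w v X B \<and>
     (\<forall>T. T \<subseteq> X \<and> card T = w \<longrightarrow> P_t t B T = {} \<or> \<Inter>(P_t t B T) \<noteq> {})"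

text \<open>I_t(w,v): maximum number of blocks of a t-IPPS(w,v); the ground set is taken to be
  {0..<v} without loss of generality (the property is invariant under relabelling).\<close>
definition I_t :: "nat \<Rightarrow> nat \<Rightarrow> nat \<Rightarrow> nat" where
  "I_t t w v = Max {card B | B :: nat set set. IPPS t w v {0..<v} B}"

end

theory Submission
  imports Defs
begin

lemma key:
  assumes ip: "IPPS t 2 v X B" and t: "t \<ge> 2" and e: "e \<in> B"
  shows "\<exists>x\<in>e. \<forall>e'\<in>B. x \<in> e' \<longrightarrow> e' = e"
proof (rule ccontr)
  assume "\<not> ?thesis"
  have ss: "set_system 2 v X B" using ip by (simp add: IPPS_def)
  have eX: "e \<subseteq> X" "card e = 2" using ss e by (auto simp: set_system_def)
  then obtain x y where xy: "e = {x,y}" "x \<noteq> y" by (meson card_2_iff)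
  from \<open>\<not> ?thesis\<close> xy obtain e1 e2 where
    e1: "e1 \<in> B" "x \<in> e1" "e1 \<noteq> e" and e2: "e2 \<in> B" "y \<in> e2" "e2 \<noteq> e" by auto
  have A: "{e} \<in> P_t t B e" using t e by (auto simp: P_t_def)
  have cB: "card {e1,e2} \<le> 2" by (simp add: card_insert_le_m1)
  have Bm: "{e1,e2} \<in> P_t t B e" using t e1 e2 xy cB by (auto simp: P_t_def)
  have "\<Inter>(P_t t B e) \<noteq> {}" using ip eX A by (auto simp: IPPS_def)
  then obtain z where "z \<in> \<Inter>(P_t t B e)" by blast
  then have "z \<in> {e}" "z \<in> {e1,e2}" using A Bm by blast+
  then show False using e1 e2 by auto
qed

lemma upper:
  assumes ip: "IPPS t 2 v {0..<v} B" and t: "t \<ge> 2" and v: "v \<ge> 2"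
  shows "card B \<le> v - 1"
proof -
  let ?X = "{0..<v}"
  have ss: "set_system 2 v ?X B" using ip by (simp add: IPPS_def)
  have BX: "\<And>e. e \<in> B \<Longrightarrow> e \<subseteq> ?X \<and> card e = 2" using ss by (auto simp: set_system_def)
  have "\<exists>z\<in>?X. \<forall>e\<in>B. \<exists>x\<in>e. x \<noteq> z \<and> (\<forall>e'\<in>B. x \<in> e' \<longrightarrow> e' = e)"
  proof (cases "\<exists>z\<in>?X. \<not> (\<exists>!e. e \<in> B \<and> z \<in> e)")
    case True
    then obtain z where z: "z \<in> ?X" "\<not> (\<exists>!e. e \<in> B \<and> z \<in> e)" by blast
    show ?thesis
    proof (intro bexI[OF _ z(1)] ballI)
      fix e assume e: "e \<in> B"
      obtain x where x: "x \<in> e" "\<forall>e'\<in>B. x \<in> e' \<longrightarrow> e' = e" using key[OF ip t e] by blast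
      have "x \<noteq> z" using x z e by blast
      then show "\<exists>x\<in>e. x \<noteq> z \<and> (\<forall>e'\<in>B. x \<in> e' \<longrightarrow> e' = e)" using x by blast
    qed
  next
    case False
    have z: "(0::nat) \<in> ?X" using v by simp
    show ?thesis
    proof (intro bexI[OF _ z] ballI)
      fix e assume e: "e \<in> B"
      obtain x y where xy: "e = {x,y}" "x \<noteq> y" using BX[OF e] by (meson card_2_iff)
      obtain w where w: "w \<in> e" "w \<noteq> 0" using xy by auto
      have wX: "w \<in> ?X" using BX[OF e] w by auto
      have "\<exists>!e. e \<in> B \<and> w \<in> e" using False wX by blast
      then have "\<forall>e'\<in>B. w \<in> e' \<longrightarrow> e' = e" using e w by blast
      then show "\<exists>x\<in>e. x \<noteq> 0 \<and> (\<forall>e'\<in>B. x \<in> e' \<longrightarrow> e' = e)" using w by blast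
    qed
  qed
  then obtain z where z: "z \<in> ?X" and hz: "\<forall>e\<in>B. \<exists>x\<in>e. x \<noteq> z \<and> (\<forall>e'\<in>B. x \<in> e' \<longrightarrow> e' = e)"
    by blast
  define f where "f e = (SOME x. x \<in> e \<and> x \<noteq> z \<and> (\<forall>e'\<in>B. x \<in> e' \<longrightarrow> e' = e))" for e
  have fP: "f e \<in> e \<and> f e \<noteq> z \<and> (\<forall>e'\<in>B. f e \<in> e' \<longrightarrow> e' = e)" if "e \<in> B" for e
  proof -
    have "\<exists>x. x \<in> e \<and> x \<noteq> z \<and> (\<forall>e'\<in>B. x \<in> e' \<longrightarrow> e' = e)" using hz that by blast
    then show ?thesis unfolding f_def by (rule someI_ex)
  qed
  have inj: "inj_on f B"
  proof
    fix a b assume "a \<in> B" "b \<in> B" "f a = f b"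
    then have "f a \<in> b" using fP[of b] by simp
    then show "a = b" using fP[of a] \<open>a \<in> B\<close> \<open>b \<in> B\<close> by blast
  qed
  have img: "f ` B \<subseteq> ?X - {z}"
  proof
    fix y assume "y \<in> f ` B"
    then obtain e where e: "e \<in> B" "y = f e" by blast
    then show "y \<in> ?X - {z}" using fP[OF e(1)] BX[OF e(1)] by blast
  qed
  have "card B = card (f ` B)" using inj by (simp add: card_image)
  also have "\<dots> \<le> card (?X - {z})" using img by (intro card_mono) auto
  also have "\<dots> = v - 1" using z by simp
  finally show ?thesis .
qed

lemma star:
  assumes v: "v \<ge> 2"
  shows "IPPS t 2 v {0..<v} ((\<lambda>i. {0::nat, i}) ` {1..<v})" (is "IPPS t 2 v ?X ?B")
proof -
  have ss: "set_system 2 v ?X ?B" using v by (auto simp: set_system_def)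
  have "\<Inter>(P_t t ?B T) \<noteq> {}" if T: "T \<subseteq> ?X" "card T = 2" for T
  proof -
    obtain a b where ab: "T = {a,b}" "a \<noteq> b" using T(2) by (meson card_2_iff)
    obtain w where w: "w \<in> T" "w \<noteq> 0" using ab by auto
    have "{0,w} \<in> \<Inter>(P_t t ?B T)"
    proof
      fix P assume "P \<in> P_t t ?B T"
      then have P: "P \<subseteq> ?B" "T \<subseteq> \<Union>P" by (auto simp: P_t_def)
      then obtain E where E: "E \<in> P" "w \<in> E" using w by blast
      then obtain i where "E = {0,i}" using P by blast
      then have "E = {0,w}" using E w by auto
      then show "{0,w} \<in> P" using E by simp
    qed
    then show ?thesis by blast
  qed
  then show ?thesis using ss by (auto simp: IPPS_def)
qed

theorem theorem3:
  fixes v t :: nat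
  assumes "v \<ge> 2" and "t \<ge> 2"
  shows "I_t t 2 v = v - 1"
proof -
  let ?S = "{card B | B :: nat set set. IPPS t 2 v {0..<v} B}"
  have le: "\<forall>y\<in>?S. y \<le> v - 1" using upper assms by blast
  have fin: "finite ?S" by (rule finite_subset[of _ "{0..v-1}"]) (use le in auto)
  have inj: "inj_on (\<lambda>i. {0::nat, i}) {1..<v}" by (auto simp: inj_on_def doubleton_eq_iff)
  have "card ((\<lambda>i. {0::nat, i}) ` {1..<v}) = v - 1" using card_image[OF inj] by simp
  then have mem: "v - 1 \<in> ?S" using star[OF assms(1), of t] by (metis (mono_tags, lifting) mem_Collect_eq)
  show ?thesis unfolding I_t_def using fin le mem by (intro Max_eqI) auto
qed

end
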